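(* For both Mixing methods $M$ (under the non-degeneracy assumption) and $M_\theta$ (no assumption), there is a constant $\tau>0$ such that, for their normalizers $y^*=y(V^* )$ and $y=y(V)$, $\|y-y^*\|^2\le\tau(f(V)-f^* )$.
   Context: Let $C\in\mathbb{R}^{n\times n}$ be symmetric with columns $c_i$ and $c_{ii}=0$, $f(V)=\langle C,V^TV\rangle$ over $V\in\mathbb{R}^{k\times n}$ with unit-norm columns ($\|\cdot\|$ the Euclidean norm), $V^*$ a global optimum of the SDP $\min_{X\succeq0}\langle C,X\rangle$ s.t. $X_{ii}=1$, and $f^*$ its optimal value. With $g_i=\sum_{j<i}c_{ij}\hat v_j+\sum_{j>i}c_{ij}v_j$ computed during one cyclic pass, the Mixing method $M$ uses normalizer $y_i=\|g_i\|$ and update $\hat v_i=-g_i/y_i$; the step-size version $M_\theta$, with $\theta\in(0,1/\max_i\|c_i\|_1)$ ($\|\cdot\|_1$ the $1$-norm), uses $y_i=\|v_i-\theta g_i\|$ and $\hat v_i=(v_i-\theta g_i)/y_i$. Non-degeneracy assumption (for $M$): all $\|g_i\|\ge\delta>0$ throughout. *)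

theory Defs
  imports "HOL-Analysis.Analysis"
begin

(* Columns v_0..v_{n-1} of V in R^k are represented as V :: nat => real^'k (indices < n);
   C is an n x n matrix given as nat => nat => real (indices < n). *)

definition unit_cols :: "nat \<Rightarrow> (nat \<Rightarrow> real^'k) \<Rightarrow> bool" where
  "unit_cols n V \<longleftrightarrow> (\<forall>i<n. norm (V i) = 1)"

definition objf :: "(nat \<Rightarrow> nat \<Rightarrow> real) \<Rightarrow> nat \<Rightarrow> (nat \<Rightarrow> real^'k) \<Rightarrow> real" where
  "objf C n V = (\<Sum>i<n. \<Sum>j<n. C i j * (V i \<bullet> V j))"

definition psd :: "nat \<Rightarrow> (nat \<Rightarrow> nat \<Rightarrow> real) \<Rightarrow> bool" where
  "psd n X \<longleftrightarrow> (\<forall>i<n. \<forall>j<n. X i j = X j i) \<and>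
     (\<forall>z::nat \<Rightarrow> real. 0 \<le> (\<Sum>i<n. \<Sum>j<n. z i * X i j * z j))"

definition sdp_opt :: "(nat \<Rightarrow> nat \<Rightarrow> real) \<Rightarrow> nat \<Rightarrow> real" where
  "sdp_opt C n = Inf {(\<Sum>i<n. \<Sum>j<n. C i j * X i j) | X. psd n X \<and> (\<forall>i<n. X i i = 1)}"

definition mix_g :: "(nat \<Rightarrow> nat \<Rightarrow> real) \<Rightarrow> nat \<Rightarrow> (nat \<Rightarrow> real^'k) \<Rightarrow> nat \<Rightarrow> real^'k" where
  "mix_g C n W i = (\<Sum>j\<in>{..<n} - {i}. C i j *\<^sub>R W j)"

(* state after updating coordinates 0..m-1 of one cyclic pass; upd g v = new v_i *)
primrec pass_state :: "(real^'k \<Rightarrow> real^'k \<Rightarrow> real^'k) \<Rightarrow> (nat \<Rightarrow> nat \<Rightarrow> real) \<Rightarrow> nat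
    \<Rightarrow> (nat \<Rightarrow> real^'k) \<Rightarrow> nat \<Rightarrow> (nat \<Rightarrow> real^'k)" where
  "pass_state upd C n V 0 = V"
| "pass_state upd C n V (Suc m) =
     (let W = pass_state upd C n V m in W(m := upd (mix_g C n W m) (W m)))"

(* g_i = sum_{j<i} c_ij vhat_j + sum_{j>i} c_ij v_j during the pass *)
definition g_pass :: "(real^'k \<Rightarrow> real^'k \<Rightarrow> real^'k) \<Rightarrow> (nat \<Rightarrow> nat \<Rightarrow> real) \<Rightarrow> nat
    \<Rightarrow> (nat \<Rightarrow> real^'k) \<Rightarrow> nat \<Rightarrow> real^'k" where
  "g_pass upd C n V i = mix_g C n (pass_state upd C n V i) i"

definition updM :: "real^'k \<Rightarrow> real^'k \<Rightarrow> real^'k" where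
  "updM g v = - ((1 / norm g) *\<^sub>R g)"

definition updT :: "real \<Rightarrow> real^'k \<Rightarrow> real^'k \<Rightarrow> real^'k" where
  "updT \<theta> g v = (1 / norm (v - \<theta> *\<^sub>R g)) *\<^sub>R (v - \<theta> *\<^sub>R g)"

definition yM :: "(nat \<Rightarrow> nat \<Rightarrow> real) \<Rightarrow> nat \<Rightarrow> (nat \<Rightarrow> real^'k) \<Rightarrow> nat \<Rightarrow> real" where
  "yM C n V i = norm (g_pass updM C n V i)"

definition yT :: "real \<Rightarrow> (nat \<Rightarrow> nat \<Rightarrow> real) \<Rightarrow> nat \<Rightarrow> (nat \<Rightarrow> real^'k) \<Rightarrow> nat \<Rightarrow> real" where
  "yT \<theta> C n V i = norm (V i - \<theta> *\<^sub>R g_pass (updT \<theta>) C n V i)"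

definition nondegM :: "real \<Rightarrow> (nat \<Rightarrow> nat \<Rightarrow> real) \<Rightarrow> nat \<Rightarrow> (nat \<Rightarrow> real^'k) \<Rightarrow> bool" where
  "nondegM \<delta> C n V \<longleftrightarrow> (\<forall>i<n. \<delta> \<le> norm (g_pass updM C n V i))"

end

theory Submission
  imports Defs
begin


lemma sum_if_out: "(\<Sum>m\<in>A. if P then f m else (0::real)) = (if P then sum f A else 0)"
  by auto

lemma quad_two:
  fixes X :: "nat \<Rightarrow> nat \<Rightarrow> real"
  assumes "i < n" "j < n" "i \<noteq> j"
  shows "(\<Sum>l<n. \<Sum>m<n. (if l = i then 1 else if l = j then s else 0) * X l m *
             (if m = i then 1 else if m = j then s else 0)) = X i i + s * X i j + s * X j i + s * s * X j j"
proof -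
  have e: "\<And>l m. (if l = i then 1 else if l = j then s else 0) * X l m *
             (if m = i then 1 else if m = j then s else 0) =
     (if l = i then (if m = i then X l m else 0) else 0) + (if l = i then (if m = j then s * X l m else 0) else 0)
    + (if l = j then (if m = i then s * X l m else 0) else 0) + (if l = j then (if m = j then s * s * X l m else 0) else 0)"
    using assms(3) by auto
  show ?thesis unfolding e using assms
    by (simp add: sum.distrib sum_if_out)
qed

lemma psd_bound:
  assumes "psd n X" "\<forall>i<n. X i i = 1" "i < n" "j < n"
  shows "\<bar>X i j\<bar> \<le> 1"
proof (cases "i = j")
  case True then show ?thesis using assms by simp
next
  case False
  have sym: "X j i = X i j" using assms unfolding psd_def by auto
  have q: "\<forall>z. 0 \<le> (\<Sum>l<n. \<Sum>m<n. z l * X l m * z m)" using assms(1) unfolding psd_def by blast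
  have "0 \<le> (\<Sum>l<n. \<Sum>m<n. (if l = i then 1 else if l = j then s else 0) * X l m * (if m = i then 1 else if m = j then s else 0))" for s
    by (rule q[rule_format])
  then have qs: "0 \<le> X i i + s * X i j + s * X j i + s * s * X j j" for s
    by (simp only: quad_two[OF assms(3,4) False])
  have "0 \<le> X i i + 1 * X i j + 1 * X j i + 1 * 1 * X j j" by (rule qs)
  moreover have "0 \<le> X i i + (-1) * X i j + (-1) * X j i + (-1) * (-1) * X j j" by (rule qs)
  ultimately show ?thesis using assms sym by auto
qed

lemma sdp_bdd: "bdd_below {(\<Sum>i<n. \<Sum>j<n. C i j * X i j) | X. psd n X \<and> (\<forall>i<n. X i i = 1)}"
proof (rule bdd_belowI[where m = "- (\<Sum>i<n. \<Sum>j<n. \<bar>C i j\<bar>)"])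
  fix x assume "x \<in> {(\<Sum>i<n. \<Sum>j<n. C i j * X i j) | X. psd n X \<and> (\<forall>i<n. X i i = 1)}"
  then obtain X where x: "x = (\<Sum>i<n. \<Sum>j<n. C i j * X i j)" and p: "psd n X" "\<forall>i<n. X i i = 1" by blast
  have "\<And>i j. i < n \<Longrightarrow> j < n \<Longrightarrow> - \<bar>C i j\<bar> \<le> C i j * X i j"
  proof -
    fix i j assume "i < n" "j < n"
    then have "\<bar>X i j\<bar> \<le> 1" using psd_bound[OF p] by auto
    then have "\<bar>C i j * X i j\<bar> \<le> \<bar>C i j\<bar>" by (simp add: abs_mult mult_left_le)
    then show "- \<bar>C i j\<bar> \<le> C i j * X i j" by linarith
  qed
  then have "(\<Sum>i<n. \<Sum>j<n. - \<bar>C i j\<bar>) \<le> x" unfolding x by (intro sum_mono) auto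
  then show "- (\<Sum>i<n. \<Sum>j<n. \<bar>C i j\<bar>) \<le> x" by (simp add: sum_negf)
qed

lemma sdp_le: "psd n X \<Longrightarrow> \<forall>i<n. X i i = 1 \<Longrightarrow> sdp_opt C n \<le> (\<Sum>i<n. \<Sum>j<n. C i j * X i j)"
  unfolding sdp_opt_def by (rule cInf_lower[OF _ sdp_bdd]) blast

lemma gram_quad: "(\<Sum>i<n. \<Sum>j<n. w i * (V i \<bullet> V j) * w j) = (\<Sum>i<n. w i *\<^sub>R V i) \<bullet> (\<Sum>j<n. w j *\<^sub>R V j)"
  apply (simp add: inner_sum_left inner_sum_right sum_distrib_left algebra_simps)
  apply (subst sum.swap)
  apply (simp add: inner_commute mult.commute mult.left_commute)
  done

lemma gram_psd: "psd n (\<lambda>i j. (V i :: real^'k) \<bullet> V j)"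
  unfolding psd_def by (simp add: gram_quad inner_commute)

lemma objf_ge: "unit_cols n V \<Longrightarrow> sdp_opt C n \<le> objf C n V"
  unfolding objf_def unit_cols_def
  by (rule sdp_le[OF gram_psd]) (simp add: power2_norm_eq_inner[symmetric])


lemma deriv_a: "((\<lambda>t. 1 / sqrt (1 + t * c)) has_field_derivative (- c / 2)) (at (0::real))"
proof -
  have "((\<lambda>t. inverse (sqrt (1 + t * c))) has_field_derivative (- c / 2)) (at (0::real))"
    by (rule derivative_eq_intros refl | simp)+
  then show ?thesis by (simp add: inverse_eq_divide)
qed

lemma deriv_term: "((\<lambda>t. K * ((x + t * p) * (1 / sqrt (1 + t * c) * (1 / sqrt (1 + t * d))))) has_field_derivative
   K * (p + x * (- c / 2 + - d / 2))) (at (0::real))"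
  by (rule derivative_eq_intros deriv_a refl | simp)+

definition ystar :: "(nat \<Rightarrow> nat \<Rightarrow> real) \<Rightarrow> nat \<Rightarrow> (nat \<Rightarrow> real^'k) \<Rightarrow> nat \<Rightarrow> real" where
  "ystar C n V i = - (\<Sum>j<n. C i j * (V i \<bullet> V j))"

definition Smat :: "(nat \<Rightarrow> nat \<Rightarrow> real) \<Rightarrow> nat \<Rightarrow> (nat \<Rightarrow> real^'k) \<Rightarrow> nat \<Rightarrow> nat \<Rightarrow> real" where
  "Smat C n V i j = C i j + (if i = j then ystar C n V i else 0)"

lemma S_form: "(\<Sum>i<n. \<Sum>j<n. z i * Smat C n V i j * z j) =
   (\<Sum>i<n. \<Sum>j<n. z i * C i j * z j) + (\<Sum>i<n. ystar C n V i * (z i)^2)"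
proof -
  have e: "\<And>i j. z i * Smat C n V i j * z j = z i * C i j * z j + (if j = i then ystar C n V i * (z i)^2 else 0)"
    by (auto simp: Smat_def power2_eq_square algebra_simps)
  show ?thesis unfolding e by (simp add: sum.distrib)
qed

lemma S_psd:
  fixes Vs :: "nat \<Rightarrow> real^'k"
  assumes symC: "\<forall>i<n. \<forall>j<n. C i j = C j i"
    and unit: "unit_cols n Vs" and opt: "objf C n Vs = sdp_opt C n"
  shows "0 \<le> (\<Sum>i<n. \<Sum>j<n. z i * Smat C n Vs i j * z j)"
proof -
  define X0 where "X0 i j = Vs i \<bullet> Vs j" for i j
  define a where "a t i = 1 / sqrt (1 + t * (z i)^2)" for t i
  define F where "F t = (\<Sum>i<n. \<Sum>j<n. C i j * ((X0 i j + t * (z i * z j)) * (a t i * a t j)))" for t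
  define L where "L = (\<Sum>i<n. \<Sum>j<n. C i j * (z i * z j + X0 i j * (- ((z i)^2) / 2 + - ((z j)^2) / 2)))"
  have D: "(F has_field_derivative L) (at 0)"
    unfolding F_def L_def a_def
    by (intro DERIV_sum deriv_term)
  have X0d: "X0 i i = 1" if "i < n" for i
    using unit that unfolding X0_def unit_cols_def by (simp add: power2_norm_eq_inner[symmetric])
  have F0: "F 0 = sdp_opt C n"
    using opt unfolding F_def a_def objf_def X0_def by simp
  have Fge: "sdp_opt C n \<le> F t" if "t > 0" for t
  proof -
    define X where "X i j = (X0 i j + t * (z i * z j)) * (a t i * a t j)" for i j
    have "psd n X"
      unfolding psd_def
    proof (intro conjI allI impI)
      fix i j assume "i < n" "j < n"
      show "X i j = X j i" unfolding X_def X0_def by (simp add: inner_commute algebra_simps)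
    next
      fix w :: "nat \<Rightarrow> real"
      define b where "b i = w i * a t i" for i
      have "(\<Sum>i<n. \<Sum>j<n. w i * X i j * w j) =
         (\<Sum>i<n. \<Sum>j<n. b i * (Vs i \<bullet> Vs j) * b j) + t * ((\<Sum>i<n. b i * z i) * (\<Sum>j<n. b j * z j))"
        unfolding X_def b_def X0_def
        by (simp add: sum_distrib_left sum_distrib_right sum.distrib algebra_simps)
      also have "\<dots> = (\<Sum>i<n. b i *\<^sub>R Vs i) \<bullet> (\<Sum>j<n. b j *\<^sub>R Vs j) + t * (\<Sum>i<n. b i * z i)^2"
        by (simp add: gram_quad power2_eq_square)
      also have "\<dots> \<ge> 0" using that by simp
      finally show "0 \<le> (\<Sum>i<n. \<Sum>j<n. w i * X i j * w j)" .
    qed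
    moreover have "\<forall>i<n. X i i = 1"
    proof (intro allI impI)
      fix i assume "i < n"
      have pos: "0 < 1 + t * (z i)^2" using that by (simp add: add_pos_nonneg)
      have "X i i = (1 + t * (z i)^2) * (1 / (sqrt (1 + t * (z i)^2) * sqrt (1 + t * (z i)^2)))"
        unfolding X_def a_def using X0d[OF \<open>i < n\<close>] by (simp add: power2_eq_square)
      also have "\<dots> = 1" using pos by simp
      finally show "X i i = 1" .
    qed
    ultimately have "sdp_opt C n \<le> (\<Sum>i<n. \<Sum>j<n. C i j * X i j)" by (rule sdp_le)
    then show ?thesis unfolding F_def X_def .
  qed
  have L0: "0 \<le> L"
  proof (rule ccontr)
    assume "\<not> 0 \<le> L"
    then have "L < 0" by simp
    from DERIV_neg_dec_right[OF D this] obtain d where d: "d > 0" "\<forall>h>0. h < d \<longrightarrow> F 0 > F (0 + h)" by blast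
    then have "F 0 > F (d/2)" by simp
    moreover have "sdp_opt C n \<le> F (d/2)" using Fge d by simp
    ultimately show False using F0 by simp
  qed
  have L1: "(\<Sum>i<n. \<Sum>j<n. C i j * (X0 i j * (- ((z j)^2) / 2))) = (\<Sum>i<n. \<Sum>j<n. C i j * (X0 i j * (- ((z i)^2) / 2)))"
    apply (subst sum.swap)
    apply (intro sum.cong refl)
    using symC unfolding X0_def by (simp add: inner_commute)
  have L2: "(\<Sum>i<n. \<Sum>j<n. C i j * (X0 i j * (- ((z i)^2) / 2))) = (\<Sum>i<n. ystar C n Vs i * (z i)^2) / 2"
    unfolding ystar_def X0_def by (simp add: sum_divide_distrib sum_distrib_left sum_distrib_right algebra_simps sum_negf)
  have "L = (\<Sum>i<n. \<Sum>j<n. z i * C i j * z j) + (\<Sum>i<n. \<Sum>j<n. C i j * (X0 i j * (- ((z i)^2) / 2)))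
      + (\<Sum>i<n. \<Sum>j<n. C i j * (X0 i j * (- ((z j)^2) / 2)))"
    unfolding L_def
    apply (simp only: sum.distrib[symmetric])
    apply (intro sum.cong refl)
    apply (simp add: algebra_simps)
    done
  also have "\<dots> = (\<Sum>i<n. \<Sum>j<n. z i * Smat C n Vs i j * z j)"
    unfolding S_form L1 L2 by simp
  finally show ?thesis using L0 by simp
qed




lemma quad_expand:
  fixes S :: "nat \<Rightarrow> nat \<Rightarrow> real"
  shows "(\<Sum>l<n. \<Sum>m<n. (x l - t * d l) * S l m * (x m - t * d m)) =
    (\<Sum>l<n. \<Sum>m<n. x l * S l m * x m) - t * (\<Sum>l<n. \<Sum>m<n. d l * S l m * x m)
    - t * (\<Sum>l<n. \<Sum>m<n. x l * S l m * d m) + t^2 * (\<Sum>l<n. \<Sum>m<n. d l * S l m * d m)"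
proof -
  have "\<And>l m. (x l - t * d l) * S l m * (x m - t * d m) =
     x l * S l m * x m - t * (d l * S l m * x m) - t * (x l * S l m * d m) + t^2 * (d l * S l m * d m)"
    by (simp add: algebra_simps power2_eq_square)
  then show ?thesis by (simp add: sum.distrib sum_subtractf sum_distrib_left)
qed

lemma mult_ind_r: "(a::real) * (if P then 1 else 0) = (if P then a else 0)" by simp
lemma mult_ind_l: "(if P then 1 else 0) * (a::real) = (if P then a else 0)" by simp

lemma if_zero_mult: "(if P then a else 0) * (b::real) = (if P then a * b else 0)" by simp

lemma quad_delta:
  fixes S :: "nat \<Rightarrow> nat \<Rightarrow> real"
  assumes "i < n"
  shows "(\<Sum>l<n. \<Sum>m<n. (if l = i then 1 else 0) * S l m * x m) = (\<Sum>m<n. S i m * x m)"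
    and "(\<Sum>l<n. \<Sum>m<n. x l * S l m * (if m = i then 1 else 0)) = (\<Sum>l<n. x l * S l i)"
    and "(\<Sum>l<n. \<Sum>m<n. (if l = i then 1 else 0) * S l m * (if m = i then 1 else 0)) = S i i"
  using assms by (simp_all add: mult_ind_r mult_ind_l if_zero_mult sum_if_out cong: if_cong)

lemma cs_psd:
  fixes S :: "nat \<Rightarrow> nat \<Rightarrow> real"
  assumes sym: "\<forall>i<n. \<forall>j<n. S i j = S j i"
    and Q: "\<forall>w. 0 \<le> (\<Sum>l<n. \<Sum>m<n. w l * S l m * w m)"
    and i: "i < n"
  shows "(\<Sum>j<n. S i j * x j)^2 \<le> S i i * (\<Sum>l<n. \<Sum>m<n. x l * S l m * x m)"
proof -
  define a where "a = S i i"
  define b where "b = (\<Sum>j<n. S i j * x j)"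
  define q where "q = (\<Sum>l<n. \<Sum>m<n. x l * S l m * x m)"
  have b2: "(\<Sum>l<n. x l * S l i) = b"
    unfolding b_def using sym i by (intro sum.cong) auto
  have key: "0 \<le> q - 2 * t * b + t^2 * a" for t
  proof -
    have "0 \<le> (\<Sum>l<n. \<Sum>m<n. (x l - t * (if l = i then 1 else 0)) * S l m * (x m - t * (if m = i then 1 else 0)))"
      by (rule Q[rule_format])
    also have "\<dots> = q - 2 * t * b + t^2 * a"
      unfolding quad_expand quad_delta[OF i] b2 a_def b_def q_def by (simp add: mult_ind_r i)
    finally show ?thesis .
  qed
  have "0 \<le> (\<Sum>l<n. \<Sum>m<n. (if l = i then 1 else 0) * S l m * (if m = i then 1 else 0))"
    by (rule Q[rule_format])
  then have a0: "0 \<le> a" unfolding quad_delta(3)[OF i] a_def .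
  show ?thesis
  proof (cases "a = 0")
    case True
    have "b = 0"
    proof (rule ccontr)
      assume "b \<noteq> 0"
      then have "0 \<le> q - 2 * ((q + 1) / (2 * b)) * b" using key[of "(q+1)/(2*b)"] True by simp
      moreover have "2 * ((q + 1) / (2 * b)) * b = q + 1" using \<open>b \<noteq> 0\<close> by (simp add: field_simps)
      ultimately show False by simp
    qed
    then show ?thesis using True a_def b_def by simp
  next
    case False
    then have ap: "0 < a" using a0 by simp
    have "0 \<le> q - 2 * (b / a) * b + (b / a)^2 * a" by (rule key)
    also have "\<dots> = q - b^2 / a" using ap by (simp add: field_simps power2_eq_square)
    finally have "b^2 / a \<le> q" by simp
    then have "b^2 \<le> a * q" using ap by (simp add: field_simps)
    then show ?thesis unfolding a_def b_def q_def .
  qed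
qed




definition Qf :: "nat \<Rightarrow> (nat \<Rightarrow> nat \<Rightarrow> real) \<Rightarrow> (nat \<Rightarrow> real) \<Rightarrow> real" where
  "Qf n S x = (\<Sum>l<n. \<Sum>m<n. x l * S l m * x m)"

lemma mix_g_full:
  assumes "i < n" "C i i = 0"
  shows "mix_g C n W i = (\<Sum>j<n. C i j *\<^sub>R W j)"
proof -
  have "(\<Sum>j<n. C i j *\<^sub>R W j) = C i i *\<^sub>R W i + (\<Sum>j\<in>{..<n} - {i}. C i j *\<^sub>R W j)"
    using assms(1) by (subst sum.remove[of _ i]) auto
  then show ?thesis using assms unfolding mix_g_def by simp
qed

locale optctx =
  fixes C :: "nat \<Rightarrow> nat \<Rightarrow> real" and n :: nat and Vs :: "nat \<Rightarrow> real^'k"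
  assumes symC: "\<forall>i<n. \<forall>j<n. C i j = C j i"
    and diagC: "\<forall>i<n. C i i = 0"
    and Vs_unit: "unit_cols n Vs"
    and Vs_opt: "objf C n Vs = sdp_opt C n"
begin

abbreviation "S \<equiv> Smat C n Vs"
abbreviation "ys \<equiv> ystar C n Vs"

lemma Ssym: "\<forall>i<n. \<forall>j<n. S i j = S j i"
  using symC unfolding Smat_def by auto

lemma SQ: "\<forall>w. 0 \<le> (\<Sum>l<n. \<Sum>m<n. w l * S l m * w m)"
  using S_psd[OF symC Vs_unit Vs_opt] by blast

lemma Sdiag: "i < n \<Longrightarrow> S i i = ys i"
  using diagC unfolding Smat_def by simp

lemma ys_nonneg: assumes "i < n" shows "0 \<le> ys i"
proof -
  have "0 \<le> (\<Sum>l<n. \<Sum>m<n. (if l = i then 1 else 0) * S l m * (if m = i then 1 else 0))"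
    by (rule SQ[rule_format])
  then show ?thesis unfolding quad_delta(3)[OF assms] Sdiag[OF assms] .
qed

lemma fstar: "sdp_opt C n = - (\<Sum>i<n. ys i)"
  unfolding Vs_opt[symmetric] objf_def ystar_def by (simp add: sum_negf)

lemma gap:
  fixes V :: "nat \<Rightarrow> real^'k"
  assumes "unit_cols n V"
  shows "objf C n V - sdp_opt C n = (\<Sum>c\<in>UNIV. Qf n S (\<lambda>j. V j $ c))"
proof -
  have vv: "V i \<bullet> V i = 1" if "i < n" for i
    using assms that unfolding unit_cols_def by (simp add: power2_norm_eq_inner[symmetric])
  have e: "\<And>i j. S i j * (V i \<bullet> V j) = C i j * (V i \<bullet> V j) + (if j = i then ys i * (V i \<bullet> V i) else 0)"
    by (simp add: Smat_def algebra_simps)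
  have "(\<Sum>i<n. \<Sum>j<n. S i j * (V i \<bullet> V j)) = objf C n V + (\<Sum>i<n. ys i)"
    unfolding e objf_def by (simp add: sum.distrib vv)
  moreover have "(\<Sum>i<n. \<Sum>j<n. S i j * (V i \<bullet> V j)) = (\<Sum>c\<in>UNIV. Qf n S (\<lambda>j. V j $ c))"
    unfolding Qf_def inner_vec_def inner_real_def
    by (simp add: sum_distrib_left sum.swap[of _ UNIV] algebra_simps)
  ultimately show ?thesis using fstar by simp
qed

lemma gap_nonneg:
  fixes V :: "nat \<Rightarrow> real^'k"
  assumes "unit_cols n V"
  shows "0 \<le> objf C n V - sdp_opt C n"
  unfolding gap[OF assms] Qf_def using SQ by (simp add: sum_nonneg)

lemma normsq_vec: "(norm (x :: real^'k))^2 = (\<Sum>c\<in>UNIV. (x $ c)^2)"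
  unfolding power2_norm_eq_inner inner_vec_def by (simp add: power2_eq_square)

lemma Abound:
  fixes V :: "nat \<Rightarrow> real^'k"
  assumes "unit_cols n V"
  shows "(\<Sum>i<n. (norm (\<Sum>j<n. S i j *\<^sub>R V j))^2) \<le> (\<Sum>i<n. ys i) * (objf C n V - sdp_opt C n)"
proof -
  have "(\<Sum>i<n. (norm (\<Sum>j<n. S i j *\<^sub>R V j))^2) = (\<Sum>i<n. \<Sum>c\<in>UNIV. (\<Sum>j<n. S i j * V j $ c)^2)"
    unfolding normsq_vec by (simp add: sum_component)
  also have "\<dots> \<le> (\<Sum>i<n. \<Sum>c\<in>UNIV. S i i * Qf n S (\<lambda>j. V j $ c))"
    unfolding Qf_def by (intro sum_mono cs_psd[OF Ssym SQ]) auto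
  also have "\<dots> = (\<Sum>i<n. ys i) * (\<Sum>c\<in>UNIV. Qf n S (\<lambda>j. V j $ c))"
    apply (simp add: Sdiag sum_distrib_left sum_distrib_right)
    apply (rule sum.swap)
    done
  finally show ?thesis unfolding gap[OF assms] .
qed

lemma Vs_stat: assumes "i < n" shows "(\<Sum>j<n. S i j *\<^sub>R Vs j) = 0"
proof -
  have "(\<Sum>i<n. (norm (\<Sum>j<n. S i j *\<^sub>R Vs j))^2) \<le> 0"
    using Abound[OF Vs_unit] Vs_opt by simp
  then have "(\<Sum>i<n. (norm (\<Sum>j<n. S i j *\<^sub>R Vs j))^2) = 0"
    by (simp add: antisym sum_nonneg)
  then have "(norm (\<Sum>j<n. S i j *\<^sub>R Vs j))^2 = 0"
    using assms by (subst (asm) sum_nonneg_eq_0_iff) auto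
  then show ?thesis by simp
qed

lemma S_split: "(\<Sum>j<n. S i j *\<^sub>R (W j :: 'a :: real_vector)) = (\<Sum>j<n. C i j *\<^sub>R W j) + (if i < n then ys i *\<^sub>R W i else 0)"
proof -
  have e: "\<And>j. S i j *\<^sub>R W j = C i j *\<^sub>R W j + (if j = i then ys i *\<^sub>R W i else 0)"
    by (auto simp: Smat_def algebra_simps)
  show ?thesis unfolding e by (simp add: sum.distrib)
qed

lemma mixg_Vs: assumes "i < n" shows "mix_g C n Vs i = - (ys i *\<^sub>R Vs i)"
proof -
  have "(\<Sum>j<n. C i j *\<^sub>R Vs j) + ys i *\<^sub>R Vs i = 0"
    using Vs_stat[OF assms] S_split[of i Vs] assms by simp
  then have "(\<Sum>j<n. C i j *\<^sub>R Vs j) = - (ys i *\<^sub>R Vs i)"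
    by (simp add: eq_neg_iff_add_eq_0)
  then show ?thesis using mix_g_full[of i n C Vs, OF assms diagC[rule_format, OF assms]] by simp
qed

end




lemma ps_struct: "pass_state upd C n V m j = (if j < m then pass_state upd C n V (Suc j) j else V j)"
proof (induction m)
  case 0 then show ?case by simp
next
  case (Suc m)
  show ?case
  proof (cases "j = m")
    case True then show ?thesis by simp
  next
    case False
    then have "pass_state upd C n V (Suc m) j = pass_state upd C n V m j" by (simp add: Let_def)
    then show ?thesis using Suc False by simp
  qed
qed

lemma ps_Suc: "pass_state upd C n V (Suc m) = (pass_state upd C n V m)(m := upd (mix_g C n (pass_state upd C n V m) m) (V m))"
  using ps_struct[of upd C n V m m] by (simp add: Let_def)

lemma mix_g_upd: "mix_g C n (W(m := u)) m = mix_g C n W m"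
  unfolding mix_g_def by (intro sum.cong) auto

lemma objf_decomp:
  assumes symC: "\<forall>i<n. \<forall>j<n. C i j = C j i" and diagC: "\<forall>i<n. C i i = 0" and m: "m < n"
  shows "objf C n W = (\<Sum>i\<in>{..<n}-{m}. \<Sum>j\<in>{..<n}-{m}. C i j * (W i \<bullet> W j)) + 2 * (W m \<bullet> mix_g C n W m)"
proof -
  have mi: "m \<in> {..<n}" using m by simp
  have row: "(\<Sum>j<n. C m j * (W m \<bullet> W j)) = W m \<bullet> mix_g C n W m"
    unfolding mix_g_full[of m n C W, OF m diagC[rule_format, OF m]]
    by (simp add: inner_sum_right)
  have col: "(\<Sum>i\<in>{..<n}-{m}. C i m * (W i \<bullet> W m)) = W m \<bullet> mix_g C n W m"
    unfolding mix_g_def using symC m by (auto simp: inner_sum_right inner_commute intro!: sum.cong)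
  have "objf C n W = (\<Sum>j<n. C m j * (W m \<bullet> W j)) + (\<Sum>i\<in>{..<n}-{m}. \<Sum>j<n. C i j * (W i \<bullet> W j))"
    unfolding objf_def by (subst sum.remove[OF _ mi]) auto
  also have "(\<Sum>i\<in>{..<n}-{m}. \<Sum>j<n. C i j * (W i \<bullet> W j)) =
      (\<Sum>i\<in>{..<n}-{m}. C i m * (W i \<bullet> W m) + (\<Sum>j\<in>{..<n}-{m}. C i j * (W i \<bullet> W j)))"
    by (intro sum.cong refl) (subst sum.remove[OF _ mi], auto)
  finally show ?thesis unfolding row sum.distrib col by simp
qed

lemma objf_upd:
  assumes symC: "\<forall>i<n. \<forall>j<n. C i j = C j i" and diagC: "\<forall>i<n. C i i = 0" and m: "m < n"
  shows "objf C n W - objf C n (W(m := u)) = 2 * ((W m - u) \<bullet> mix_g C n W m)"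
proof -
  have R: "(\<Sum>i\<in>{..<n}-{m}. \<Sum>j\<in>{..<n}-{m}. C i j * ((W(m:=u)) i \<bullet> (W(m:=u)) j)) =
     (\<Sum>i\<in>{..<n}-{m}. \<Sum>j\<in>{..<n}-{m}. C i j * (W i \<bullet> W j))"
    by (intro sum.cong refl) auto
  show ?thesis
    unfolding objf_decomp[OF symC diagC m, of W] objf_decomp[OF symC diagC m, of "W(m:=u)"] R mix_g_upd
    by (simp add: inner_diff_left algebra_simps)
qed

lemma pass_gen:
  fixes V :: "nat \<Rightarrow> real^'k"
  assumes symC: "\<forall>i<n. \<forall>j<n. C i j = C j i" and diagC: "\<forall>i<n. C i i = 0"
    and unit: "unit_cols n V"
    and H: "\<And>m. m < n \<Longrightarrow> unit_cols n (pass_state upd C n V m) \<Longrightarrow>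
       norm (upd (mix_g C n (pass_state upd C n V m) m) (V m)) = 1 \<and>
       \<kappa> * (norm (upd (mix_g C n (pass_state upd C n V m) m) (V m) - V m))^2
         \<le> 2 * ((V m - upd (mix_g C n (pass_state upd C n V m) m) (V m)) \<bullet> mix_g C n (pass_state upd C n V m) m)"
  shows "k \<le> n \<Longrightarrow> unit_cols n (pass_state upd C n V k) \<and>
     \<kappa> * (\<Sum>m<k. (norm (pass_state upd C n V (Suc m) m - V m))^2) \<le> objf C n V - objf C n (pass_state upd C n V k)"
proof (induction k)
  case 0 then show ?case using unit by simp
next
  case (Suc k)
  let ?P = "pass_state upd C n V"
  let ?u = "upd (mix_g C n (?P k) k) (V k)"
  have k: "k < n" using Suc by simp
  have IH: "unit_cols n (?P k)" "\<kappa> * (\<Sum>m<k. (norm (?P (Suc m) m - V m))^2) \<le> objf C n V - objf C n (?P k)"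
    using Suc by auto
  have Hk: "norm ?u = 1" "\<kappa> * (norm (?u - V k))^2 \<le> 2 * ((V k - ?u) \<bullet> mix_g C n (?P k) k)"
    using H[OF k IH(1)] by auto
  have PS: "?P (Suc k) = (?P k)(k := ?u)" by (rule ps_Suc)
  have Pk: "?P k k = V k" using ps_struct[of upd C n V k k] by simp
  have "unit_cols n (?P (Suc k))" using IH(1) Hk(1) unfolding PS unit_cols_def by auto
  moreover have "objf C n (?P k) - objf C n (?P (Suc k)) = 2 * ((V k - ?u) \<bullet> mix_g C n (?P k) k)"
    unfolding PS using objf_upd[OF symC diagC k, of "?P k" ?u] Pk by simp
  moreover have "?P (Suc k) k = ?u" unfolding PS by simp
  ultimately show ?case using IH(2) Hk(2) by (simp del: pass_state.simps add: distrib_left)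
qed




lemma stepM:
  fixes w g :: "real^'k"
  assumes w: "norm w = 1" and g: "g \<noteq> 0"
  shows "norm (updM g w) = 1" "norm g * (norm (updM g w - w))^2 = 2 * ((w - updM g w) \<bullet> g)"
proof -
  have ng: "norm g > 0" using g by simp
  show "norm (updM g w) = 1" unfolding updM_def using ng by simp
  have ww: "w \<bullet> w = 1" using w by (simp add: power2_norm_eq_inner[symmetric])
  have gg: "g \<bullet> g = (norm g)^2" by (simp add: power2_norm_eq_inner)
  show "norm g * (norm (updM g w - w))^2 = 2 * ((w - updM g w) \<bullet> g)"
    unfolding updM_def power2_norm_eq_inner
    using ng ww gg
    by (simp add: inner_diff_left inner_diff_right inner_add_right inner_commute field_simps power2_eq_square)
qed

lemma stepT_aux:
  fixes w z :: "real^'k"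
  assumes w: "norm w = 1" and y: "norm z = y" "y > 0" and th: "\<theta> > 0"
  shows "2 * ((w - (1/y) *\<^sub>R z) \<bullet> ((1/\<theta>) *\<^sub>R (w - z))) = (1 + y) / \<theta> * (norm ((1/y) *\<^sub>R z - w))^2"
proof -
  have ww: "w \<bullet> w = 1" using w by (simp add: power2_norm_eq_inner[symmetric])
  have zz: "z \<bullet> z = y^2" unfolding y(1)[symmetric] by (simp add: power2_norm_eq_inner)
  define a where "a = w \<bullet> z"
  have L: "2 * ((w - (1/y) *\<^sub>R z) \<bullet> ((1/\<theta>) *\<^sub>R (w - z))) = (2/\<theta>) * (w \<bullet> w - w \<bullet> z - (1/y) * (z \<bullet> w) + (1/y) * (z \<bullet> z))"
    by (simp add: inner_diff_left inner_diff_right algebra_simps)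
  have R: "(norm ((1/y) *\<^sub>R z - w))^2 = (1/y)^2 * (z \<bullet> z) - 2 * (1/y) * (z \<bullet> w) + w \<bullet> w"
    unfolding power2_norm_eq_inner by (simp add: inner_diff_left inner_diff_right inner_commute algebra_simps power2_eq_square)
  have zw: "z \<bullet> w = a" unfolding a_def by (simp add: inner_commute)
  have sc: "(2/\<theta>) * (1 - a - (1/y) * a + (1/y) * y^2) = (1 + y) / \<theta> * ((1/y)^2 * y^2 - 2 * (1/y) * a + 1)"
    using y(2) th by (simp add: field_simps power2_eq_square)
  show ?thesis unfolding L R zz ww zw a_def[symmetric] using sc by simp
qed




lemma stepT:
  fixes w g :: "real^'k"
  assumes w: "norm w = 1" and th: "\<theta> > 0" and y: "norm (w - \<theta> *\<^sub>R g) > 0"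
  shows "norm (updT \<theta> g w) = 1"
    "(1 / \<theta>) * (norm (updT \<theta> g w - w))^2 \<le> 2 * ((w - updT \<theta> g w) \<bullet> g)"
proof -
  show "norm (updT \<theta> g w) = 1" unfolding updT_def using y by simp
  define z where "z = w - \<theta> *\<^sub>R g"
  have yz: "norm z > 0" using y unfolding z_def .
  have gz: "(1/\<theta>) *\<^sub>R (w - z) = g" unfolding z_def using th by simp
  have a: "2 * ((w - (1/norm z) *\<^sub>R z) \<bullet> g) = (1 + norm z)/\<theta> * (norm ((1/norm z) *\<^sub>R z - w))^2"
    using stepT_aux[OF w refl yz th] unfolding gz .
  have u: "updT \<theta> g w = (1/norm z) *\<^sub>R z" unfolding updT_def z_def ..
  have m1: "1/\<theta> \<le> (1 + norm z)/\<theta>" using th by (intro divide_right_mono) auto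
  have "(1 / \<theta>) * (norm (updT \<theta> g w - w))^2 \<le> (1 + norm z)/\<theta> * (norm (updT \<theta> g w - w))^2"
    by (rule mult_right_mono[OF m1]) simp
  then show "(1 / \<theta>) * (norm (updT \<theta> g w - w))^2 \<le> 2 * ((w - updT \<theta> g w) \<bullet> g)"
    unfolding u a[symmetric] .
qed

lemma norm_mixg:
  fixes W :: "nat \<Rightarrow> real^'k"
  assumes "unit_cols n W"
  shows "norm (mix_g C n W m) \<le> (\<Sum>j<n. \<bar>C m j\<bar>)"
proof -
  have "norm (mix_g C n W m) \<le> (\<Sum>j\<in>{..<n}-{m}. norm (C m j *\<^sub>R W j))"
    unfolding mix_g_def by (rule norm_sum)
  also have "\<dots> = (\<Sum>j\<in>{..<n}-{m}. \<bar>C m j\<bar>)" using assms unfolding unit_cols_def by (intro sum.cong) auto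
  also have "\<dots> \<le> (\<Sum>j<n. \<bar>C m j\<bar>)" by (intro sum_mono2) auto
  finally show ?thesis .
qed




lemma sq2: "((x::real) + y)^2 \<le> 2 * x^2 + 2 * y^2"
proof -
  have "0 \<le> (x - y)^2" by simp
  then show ?thesis by (simp add: power2_eq_square algebra_simps)
qed

lemma sq_sum_le: "(norm (a + b :: real^'k))^2 \<le> 2 * (norm a)^2 + 2 * (norm b)^2"
proof -
  have "norm (a + b) \<le> norm a + norm b" by (rule norm_triangle_ineq)
  then have "(norm (a + b))^2 \<le> (norm a + norm b)^2" by (intro power_mono) auto
  also have "\<dots> \<le> 2 * (norm a)^2 + 2 * (norm b)^2" by (rule sq2)
  finally show ?thesis .
qed

lemma sq_abs_le: "\<bar>x::real\<bar> \<le> y \<Longrightarrow> x^2 \<le> y^2"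
  by (metis abs_ge_zero order_trans power2_abs power_mono)

context optctx
begin

lemma est:
  fixes V :: "nat \<Rightarrow> real^'k"
  assumes unit: "unit_cols n V" and i: "i < n"
  shows "(norm (g_pass upd C n V i + ys i *\<^sub>R V i))^2 \<le> 2 * (norm (\<Sum>j<n. S i j *\<^sub>R V j))^2
     + 2 * (\<Sum>j<n. \<bar>C i j\<bar>)^2 * (\<Sum>j<n. (norm (pass_state upd C n V (Suc j) j - V j))^2)"
proof -
  define vh where "vh j = pass_state upd C n V (Suc j) j" for j
  define D where "D = (\<Sum>j<n. (norm (vh j - V j))^2)"
  define d where "d j = (if j < i then vh j - V j else 0)" for j
  define B where "B = (\<Sum>j<n. C i j *\<^sub>R d j)"
  have W: "pass_state upd C n V i j = V j + d j" for j
    using ps_struct[of upd C n V i j] unfolding d_def vh_def by simp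
  have g: "g_pass upd C n V i = (\<Sum>j<n. C i j *\<^sub>R V j) + B"
    unfolding g_pass_def mix_g_full[of i n C, OF i diagC[rule_format, OF i]] W B_def
    by (simp add: scaleR_add_right sum.distrib)
  have gA: "g_pass upd C n V i + ys i *\<^sub>R V i = (\<Sum>j<n. S i j *\<^sub>R V j) + B"
    unfolding g S_split using i by simp
  have dD: "norm (d j) \<le> sqrt D" if "j < n" for j
  proof -
    have "(norm (vh j - V j))^2 \<le> D" unfolding D_def using that
      by (intro member_le_sum) auto
    then have "norm (vh j - V j) \<le> sqrt D" by (rule real_le_rsqrt)
    moreover have "0 \<le> sqrt D" unfolding D_def by (simp add: sum_nonneg)
    ultimately show ?thesis unfolding d_def by auto
  qed
  have "norm B \<le> (\<Sum>j<n. norm (C i j *\<^sub>R d j))" unfolding B_def by (rule norm_sum)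
  also have "\<dots> \<le> (\<Sum>j<n. \<bar>C i j\<bar> * sqrt D)"
    using dD by (intro sum_mono) (simp add: mult_left_mono)
  also have "\<dots> = (\<Sum>j<n. \<bar>C i j\<bar>) * sqrt D" by (simp add: sum_distrib_right)
  finally have nB: "norm B \<le> (\<Sum>j<n. \<bar>C i j\<bar>) * sqrt D" .
  have "(norm B)^2 \<le> ((\<Sum>j<n. \<bar>C i j\<bar>) * sqrt D)^2" using nB by (intro power_mono) auto
  also have "\<dots> = (\<Sum>j<n. \<bar>C i j\<bar>)^2 * D"
    unfolding D_def by (simp add: power_mult_distrib sum_nonneg)
  finally have nB2: "(norm B)^2 \<le> (\<Sum>j<n. \<bar>C i j\<bar>)^2 * D" .
  show ?thesis unfolding gA using sq_sum_le[of "\<Sum>j<n. S i j *\<^sub>R V j" B] nB2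
    unfolding D_def vh_def by simp
qed

lemma ps_fixed:
  assumes "\<And>m. m < n \<Longrightarrow> pass_state upd C n Vs m = Vs \<Longrightarrow> upd (mix_g C n Vs m) (Vs m) = Vs m"
  shows "m \<le> n \<Longrightarrow> pass_state upd C n Vs m = Vs"
proof (induction m)
  case 0 then show ?case by simp
next
  case (Suc m)
  then have "pass_state upd C n Vs m = Vs" by simp
  then show ?case using assms[of m] Suc by (simp add: Let_def)
qed

end




context optctx
begin

lemma estsum:
  fixes V :: "nat \<Rightarrow> real^'k"
  assumes unit: "unit_cols n V"
  shows "(\<Sum>i<n. (norm (g_pass upd C n V i + ys i *\<^sub>R V i))^2) \<le>
     2 * (\<Sum>i<n. ys i) * (objf C n V - sdp_opt C n)
     + 2 * (\<Sum>i<n. (\<Sum>j<n. \<bar>C i j\<bar>)^2) * (\<Sum>j<n. (norm (pass_state upd C n V (Suc j) j - V j))^2)"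
proof -
  have "(\<Sum>i<n. (norm (g_pass upd C n V i + ys i *\<^sub>R V i))^2) \<le>
     (\<Sum>i<n. 2 * (norm (\<Sum>j<n. S i j *\<^sub>R V j))^2
     + 2 * (\<Sum>j<n. \<bar>C i j\<bar>)^2 * (\<Sum>j<n. (norm (pass_state upd C n V (Suc j) j - V j))^2))"
    by (intro sum_mono est[OF unit]) auto
  also have "\<dots> = 2 * (\<Sum>i<n. (norm (\<Sum>j<n. S i j *\<^sub>R V j))^2)
     + 2 * (\<Sum>i<n. (\<Sum>j<n. \<bar>C i j\<bar>)^2) * (\<Sum>j<n. (norm (pass_state upd C n V (Suc j) j - V j))^2)"
    apply (simp add: sum.distrib sum_distrib_left sum_distrib_right del: pass_state.simps)
    apply (rule sum.swap)
    done
  also have "\<dots> \<le> 2 * ((\<Sum>i<n. ys i) * (objf C n V - sdp_opt C n))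
     + 2 * (\<Sum>i<n. (\<Sum>j<n. \<bar>C i j\<bar>)^2) * (\<Sum>j<n. (norm (pass_state upd C n V (Suc j) j - V j))^2)"
    using Abound[OF unit] by simp
  finally show ?thesis by simp
qed

lemma partM:
  assumes d: "0 < \<delta>" and ndVs: "nondegM \<delta> C n Vs"
  shows "\<exists>\<tau>>0. \<forall>V::nat \<Rightarrow> real^'k. unit_cols n V \<and> nondegM \<delta> C n V \<longrightarrow>
              (\<Sum>i<n. (yM C n V i - yM C n Vs i)\<^sup>2) \<le> \<tau> * (objf C n V - sdp_opt C n)"
proof -
  define tr where "tr = (\<Sum>i<n. ys i)"
  define K2 where "K2 = (\<Sum>i<n. (\<Sum>j<n. \<bar>C i j\<bar>)^2)"
  have tr0: "0 \<le> tr" unfolding tr_def by (intro sum_nonneg ys_nonneg) auto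
  have K0: "0 \<le> K2" unfolding K2_def by (intro sum_nonneg) auto
  have fixP: "pass_state updM C n Vs m = Vs" if "m \<le> n" for m
  proof (rule ps_fixed[OF _ that])
    fix m assume m: "m < n" and P: "pass_state updM C n Vs m = Vs"
    have "\<delta> \<le> norm (g_pass updM C n Vs m)" using ndVs m unfolding nondegM_def by auto
    then have "\<delta> \<le> ys m" unfolding g_pass_def P mixg_Vs[OF m] using Vs_unit m ys_nonneg[OF m]
      unfolding unit_cols_def by simp
    then show "updM (mix_g C n Vs m) (Vs m) = Vs m" unfolding mixg_Vs[OF m] updM_def using d Vs_unit m unfolding unit_cols_def by simp
  qed
  have yVs: "yM C n Vs i = ys i" if "i < n" for i
    unfolding yM_def g_pass_def fixP[OF less_imp_le[OF that]] using that mixg_Vs[OF that] Vs_unit ys_nonneg[OF that]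
    unfolding unit_cols_def by simp
  show ?thesis
  proof (intro exI[of _ "2 * tr + 2 * K2 / \<delta> + 1"] conjI allI impI)
    show "0 < 2 * tr + 2 * K2 / \<delta> + 1" proof -
      have "0 \<le> K2 / \<delta>" using K0 d by simp
      then show ?thesis using tr0 by linarith
    qed
    fix V :: "nat \<Rightarrow> real^'k"
    assume "unit_cols n V \<and> nondegM \<delta> C n V"
    then have unit: "unit_cols n V" and nd: "nondegM \<delta> C n V" by auto
    define E where "E = objf C n V - sdp_opt C n"
    define D where "D = (\<Sum>j<n. (norm (pass_state updM C n V (Suc j) j - V j))^2)"
    have E0: "0 \<le> E" unfolding E_def by (rule gap_nonneg[OF unit])
    have PG: "unit_cols n (pass_state updM C n V n) \<and> \<delta> * D \<le> objf C n V - objf C n (pass_state updM C n V n)"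
      unfolding D_def
    proof (rule pass_gen[OF symC diagC unit _ order_refl])
      fix m assume m: "m < n" and uP: "unit_cols n (pass_state updM C n V m)"
      define g where "g = mix_g C n (pass_state updM C n V m) m"
      have dg: "\<delta> \<le> norm g" using nd m unfolding nondegM_def g_pass_def g_def by auto
      then have g0: "g \<noteq> 0" using d by auto
      have w: "norm (V m) = 1" using unit m unfolding unit_cols_def by auto
      have "\<delta> * (norm (updM g (V m) - V m))^2 \<le> norm g * (norm (updM g (V m) - V m))^2"
        using dg by (intro mult_right_mono) auto
      then show "norm (updM g (V m)) = 1 \<and> \<delta> * (norm (updM g (V m) - V m))^2 \<le> 2 * ((V m - updM g (V m)) \<bullet> g)"
        using stepM[OF w g0] by simp
    qed
    have "sdp_opt C n \<le> objf C n (pass_state updM C n V n)" using PG objf_ge by blast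
    then have DE: "D \<le> E / \<delta>" using PG d unfolding E_def by (simp add: field_simps)
    have each: "(yM C n V i - yM C n Vs i)^2 \<le> (norm (g_pass updM C n V i + ys i *\<^sub>R V i))^2" if i: "i < n" for i
    proof -
      have "norm (- (ys i *\<^sub>R V i)) = ys i" using unit i ys_nonneg[OF i] unfolding unit_cols_def by simp
      then have "\<bar>yM C n V i - yM C n Vs i\<bar> \<le> norm (g_pass updM C n V i - - (ys i *\<^sub>R V i))"
        unfolding yM_def[of C n V] yVs[OF i] using norm_triangle_ineq3 by metis
      then show ?thesis by (intro sq_abs_le) simp
    qed
    have "(\<Sum>i<n. (yM C n V i - yM C n Vs i)^2) \<le> (\<Sum>i<n. (norm (g_pass updM C n V i + ys i *\<^sub>R V i))^2)"
      by (intro sum_mono each) auto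
    also have "\<dots> \<le> 2 * tr * E + 2 * K2 * D" using estsum[OF unit, of updM] unfolding tr_def K2_def E_def D_def .
    also have "\<dots> \<le> 2 * tr * E + 2 * K2 * (E / \<delta>)" using DE K0 by (intro add_left_mono mult_left_mono) auto
    also have "\<dots> \<le> (2 * tr + 2 * K2 / \<delta> + 1) * E" using E0 by (simp add: algebra_simps)
    finally show "(\<Sum>i<n. (yM C n V i - yM C n Vs i)\<^sup>2) \<le> (2 * tr + 2 * K2 / \<delta> + 1) * (objf C n V - sdp_opt C n)"
      unfolding E_def .
  qed
qed

lemma partT:
  assumes th: "0 < \<theta>" and thC: "\<forall>i<n. \<theta> * (\<Sum>j<n. \<bar>C j i\<bar>) < 1"
  shows "\<exists>\<tau>>0. \<forall>V::nat \<Rightarrow> real^'k. unit_cols n V \<longrightarrow>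
              (\<Sum>i<n. (yT \<theta> C n V i - yT \<theta> C n Vs i)\<^sup>2) \<le> \<tau> * (objf C n V - sdp_opt C n)"
proof -
  define tr where "tr = (\<Sum>i<n. ys i)"
  define K2 where "K2 = (\<Sum>i<n. (\<Sum>j<n. \<bar>C i j\<bar>)^2)"
  have tr0: "0 \<le> tr" unfolding tr_def by (intro sum_nonneg ys_nonneg) auto
  have K0: "0 \<le> K2" unfolding K2_def by (intro sum_nonneg) auto
  have thC': "\<theta> * (\<Sum>j<n. \<bar>C m j\<bar>) < 1" if "m < n" for m
  proof -
    have "(\<Sum>j<n. \<bar>C m j\<bar>) = (\<Sum>j<n. \<bar>C j m\<bar>)" using symC that by (intro sum.cong) auto
    then show ?thesis using thC that by simp
  qed
  have vstep: "Vs m - \<theta> *\<^sub>R mix_g C n Vs m = (1 + \<theta> * ys m) *\<^sub>R Vs m" if "m < n" for m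
    unfolding mixg_Vs[OF that] by (simp add: algebra_simps)
  have vnorm: "norm ((1 + \<theta> * ys m) *\<^sub>R Vs m) = 1 + \<theta> * ys m" if "m < n" for m
  proof -
    have "0 \<le> \<theta> * ys m" using th ys_nonneg[OF that] by simp
    then show ?thesis using Vs_unit that unfolding unit_cols_def by simp
  qed
  have fixP: "pass_state (updT \<theta>) C n Vs m = Vs" if "m \<le> n" for m
  proof (rule ps_fixed[OF _ that])
    fix m assume m: "m < n"
    have "0 \<le> \<theta> * ys m" using th ys_nonneg[OF m] by simp
    then show "updT \<theta> (mix_g C n Vs m) (Vs m) = Vs m"
      unfolding updT_def vstep[OF m] vnorm[OF m] by simp
  qed
  have yVs: "yT \<theta> C n Vs i = 1 + \<theta> * ys i" if "i < n" for i
    unfolding yT_def g_pass_def fixP[OF less_imp_le[OF that]] vstep[OF that] vnorm[OF that] ..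
  show ?thesis
  proof (intro exI[of _ "\<theta>^2 * (2 * tr + 2 * K2 * \<theta>) + 1"] conjI allI impI)
    show "0 < \<theta>^2 * (2 * tr + 2 * K2 * \<theta>) + 1"
    proof -
      have "0 \<le> \<theta>^2 * (2 * tr + 2 * K2 * \<theta>)" using K0 tr0 th by simp
      then show ?thesis by linarith
    qed
    fix V :: "nat \<Rightarrow> real^'k"
    assume unit: "unit_cols n V"
    define E where "E = objf C n V - sdp_opt C n"
    define D where "D = (\<Sum>j<n. (norm (pass_state (updT \<theta>) C n V (Suc j) j - V j))^2)"
    have E0: "0 \<le> E" unfolding E_def by (rule gap_nonneg[OF unit])
    have PG: "unit_cols n (pass_state (updT \<theta>) C n V n) \<and> (1/\<theta>) * D \<le> objf C n V - objf C n (pass_state (updT \<theta>) C n V n)"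
      unfolding D_def
    proof (rule pass_gen[OF symC diagC unit _ order_refl])
      fix m assume m: "m < n" and uP: "unit_cols n (pass_state (updT \<theta>) C n V m)"
      define g where "g = mix_g C n (pass_state (updT \<theta>) C n V m) m"
      have w: "norm (V m) = 1" using unit m unfolding unit_cols_def by auto
      have "norm g \<le> (\<Sum>j<n. \<bar>C m j\<bar>)" unfolding g_def by (rule norm_mixg[OF uP])
      then have "\<theta> * norm g < 1" using thC'[OF m] th
        by (meson le_less_trans mult_left_mono less_imp_le)
      then have "norm (\<theta> *\<^sub>R g) < 1" using th by simp
      moreover have "norm (V m) - norm (\<theta> *\<^sub>R g) \<le> norm (V m - \<theta> *\<^sub>R g)" by (rule norm_triangle_ineq2)
      ultimately have "norm (V m - \<theta> *\<^sub>R g) > 0" using w by linarith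
      then show "norm (updT \<theta> g (V m)) = 1 \<and> (1/\<theta>) * (norm (updT \<theta> g (V m) - V m))^2 \<le> 2 * ((V m - updT \<theta> g (V m)) \<bullet> g)"
        using stepT[OF w th] by simp
    qed
    have "sdp_opt C n \<le> objf C n (pass_state (updT \<theta>) C n V n)" using PG objf_ge by blast
    then have "(1/\<theta>) * D \<le> E" using PG unfolding E_def by linarith
    then have DE: "D \<le> \<theta> * E" using th by (simp add: field_simps)
    have each: "(yT \<theta> C n V i - yT \<theta> C n Vs i)^2 \<le> \<theta>^2 * (norm (g_pass (updT \<theta>) C n V i + ys i *\<^sub>R V i))^2" if i: "i < n" for i
    proof -
      have nv: "norm ((1 + \<theta> * ys i) *\<^sub>R V i) = 1 + \<theta> * ys i"
      proof -
        have "0 \<le> \<theta> * ys i" using th ys_nonneg[OF i] by simp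
        then show ?thesis using unit i unfolding unit_cols_def by simp
      qed
      have eq: "V i - \<theta> *\<^sub>R g_pass (updT \<theta>) C n V i - (1 + \<theta> * ys i) *\<^sub>R V i
          = - (\<theta> *\<^sub>R (g_pass (updT \<theta>) C n V i + ys i *\<^sub>R V i))"
        by (simp add: algebra_simps)
      have "\<bar>yT \<theta> C n V i - yT \<theta> C n Vs i\<bar> \<le> norm (V i - \<theta> *\<^sub>R g_pass (updT \<theta>) C n V i - (1 + \<theta> * ys i) *\<^sub>R V i)"
        unfolding yT_def[of \<theta> C n V] yVs[OF i] using norm_triangle_ineq3 nv by metis
      also have "\<dots> = \<theta> * norm (g_pass (updT \<theta>) C n V i + ys i *\<^sub>R V i)" unfolding eq using th by simp
      finally have "(yT \<theta> C n V i - yT \<theta> C n Vs i)^2 \<le> (\<theta> * norm (g_pass (updT \<theta>) C n V i + ys i *\<^sub>R V i))^2"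
        by (rule sq_abs_le)
      then show ?thesis by (simp add: power_mult_distrib)
    qed
    have "(\<Sum>i<n. (yT \<theta> C n V i - yT \<theta> C n Vs i)^2) \<le> (\<Sum>i<n. \<theta>^2 * (norm (g_pass (updT \<theta>) C n V i + ys i *\<^sub>R V i))^2)"
      by (intro sum_mono each) auto
    also have "\<dots> = \<theta>^2 * (\<Sum>i<n. (norm (g_pass (updT \<theta>) C n V i + ys i *\<^sub>R V i))^2)"
      by (simp add: sum_distrib_left)
    also have "\<dots> \<le> \<theta>^2 * (2 * tr * E + 2 * K2 * D)"
      using estsum[OF unit, of "updT \<theta>"] unfolding tr_def K2_def E_def D_def by (intro mult_left_mono) auto
    also have "\<dots> \<le> \<theta>^2 * (2 * tr * E + 2 * K2 * (\<theta> * E))"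
      using DE K0 by (intro mult_left_mono add_left_mono) auto
    also have "\<dots> \<le> (\<theta>^2 * (2 * tr + 2 * K2 * \<theta>) + 1) * E" using E0 by (simp add: algebra_simps)
    finally show "(\<Sum>i<n. (yT \<theta> C n V i - yT \<theta> C n Vs i)\<^sup>2) \<le> (\<theta>^2 * (2 * tr + 2 * K2 * \<theta>) + 1) * (objf C n V - sdp_opt C n)"
      unfolding E_def .
  qed
qed

end


theorem lemma19:
  fixes C :: "nat \<Rightarrow> nat \<Rightarrow> real" and n :: nat and Vs :: "nat \<Rightarrow> real^'k"
    and \<delta> \<theta> :: real
  assumes symC: "\<forall>i<n. \<forall>j<n. C i j = C j i"
    and diagC: "\<forall>i<n. C i i = 0"
    and Vs_unit: "unit_cols n Vs"
    and Vs_opt: "objf C n Vs = sdp_opt C n"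
  shows "(0 < \<delta> \<and> nondegM \<delta> C n Vs \<longrightarrow>
           (\<exists>\<tau>>0. \<forall>V::nat \<Rightarrow> real^'k. unit_cols n V \<and> nondegM \<delta> C n V \<longrightarrow>
              (\<Sum>i<n. (yM C n V i - yM C n Vs i)\<^sup>2) \<le> \<tau> * (objf C n V - sdp_opt C n)))
       \<and> (0 < \<theta> \<and> (\<forall>i<n. \<theta> * (\<Sum>j<n. \<bar>C j i\<bar>) < 1) \<longrightarrow>
           (\<exists>\<tau>>0. \<forall>V::nat \<Rightarrow> real^'k. unit_cols n V \<longrightarrow>
              (\<Sum>i<n. (yT \<theta> C n V i - yT \<theta> C n Vs i)\<^sup>2) \<le> \<tau> * (objf C n V - sdp_opt C n)))"
proof -
  interpret optctx C n Vs using symC diagC Vs_unit Vs_opt by unfold_locales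
  show ?thesis using partM partT by blast
qed

end
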